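(* Let $f:\mathbb{N}^k\to\mathbb{N}$ with $k\ge1$. The following are equivalent: (a) $f\notin\mathscr{C}_{I_{\bar d=0}}$; (b) some shadow of $f$ is minimal; (c) some shadow of $f$ is bad; (d) some shadow of $f$ is not in $\mathscr{C}_{I_{\bar d=0}}$.
   Context: $\mathbb{N}=\{0,1,2,\dots\}$. For $A\subseteq\mathbb{N}$, $\bar d(A)=\limsup_{n\to\infty}\frac{|A\cap[0,n)|}{n}$. $\mathscr{C}_{I_{\bar d=0}}$ is the set of all finitary functions $f:\mathbb{N}^k\to\mathbb{N}$ ($k\ge1$) such that $\bar d(f[A^k])=0$ whenever $\bar d(A)=0$. For $f:\mathbb{N}^k\to\mathbb{N}$, a permutation $\pi$ of $\{1,\dots,k\}$ and $\bar a=(a_1,\dots,a_\ell)\in\mathbb{N}^\ell$ with $0\le\ell<k$, the shadow $f_{\pi,\bar a}$ is the $(k-\ell)$-ary function $(y_1,\dots,y_{k-\ell})\mapsto f_\pi(a_1,\dots,a_\ell,y_1,\dots,y_{k-\ell})$, where $f_\pi(x_1,\dots,x_k)=f(x_{\pi(1)},\dots,x_{\pi(k)})$. The shadows with $\ell>0$ are proper; those with $\ell=0$ (the functions $f_\pi$, including $f$ itself) are improper; "shadow" means proper or improper shadow. $f$ is minimal if $f\notin\mathscr{C}_{I_{\bar d=0}}$ and every proper shadow of $f$ lies in $\mathscr{C}_{I_{\bar d=0}}$. $f$ is bad if there exists a rational $\varepsilon>0$ such that for every $i\in\mathbb{N}$ there are $n,t\ge i$ and $A\subseteq[i,n)$ with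 $|A\cap[0,r)|\le\frac{r}{2^i}$ for all $r\in\mathbb{N}$ and $|f[A^k]\cap[0,t)|\ge\varepsilon t$. *)

theory Defs
  imports Complex_Main "HOL-Library.Extended_Real" "HOL-Library.Liminf_Limsup" "HOL-Combinatorics.Permutations"
begin

text \<open>A k-ary function N^k -> N is represented by a function on lists; only its
values on lists of length k matter.\<close>

definition upper_density :: "nat set \<Rightarrow> ereal" where
  "upper_density A = limsup (\<lambda>n. ereal (real (card (A \<inter> {..<n})) / real n))"

definition tuples :: "nat \<Rightarrow> nat set \<Rightarrow> nat list set" where
  "tuples k A = {xs. length xs = k \<and> set xs \<subseteq> A}"

definition img :: "nat \<Rightarrow> (nat list \<Rightarrow> nat) \<Rightarrow> nat set \<Rightarrow> nat set" where
  "img k f A = f ` tuples k A"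

definition in_C :: "nat \<Rightarrow> (nat list \<Rightarrow> nat) \<Rightarrow> bool" where
  "in_C k f \<longleftrightarrow> k \<ge> 1 \<and>
     (\<forall>A. upper_density A = 0 \<longrightarrow> upper_density (img k f A) = 0)"

text \<open>f_pi (x_1..x_k) = f (x_{pi 1}, ..., x_{pi k}), with 0-based indices.\<close>
definition perm_fun :: "nat \<Rightarrow> (nat \<Rightarrow> nat) \<Rightarrow> (nat list \<Rightarrow> nat) \<Rightarrow> nat list \<Rightarrow> nat" where
  "perm_fun k \<pi> f xs = f (map (\<lambda>i. xs ! \<pi> i) [0..<k])"

definition shadow_l :: "nat \<Rightarrow> (nat list \<Rightarrow> nat) \<Rightarrow> nat \<Rightarrow> (nat list \<Rightarrow> nat) \<Rightarrow> nat \<Rightarrow> bool" where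
  "shadow_l k f m g l \<longleftrightarrow> (\<exists>\<pi> as. \<pi> permutes {..<k} \<and> length as = l \<and> l < k \<and>
       m = k - l \<and> g = (\<lambda>ys. perm_fun k \<pi> f (as @ ys)))"

definition shadow :: "nat \<Rightarrow> (nat list \<Rightarrow> nat) \<Rightarrow> nat \<Rightarrow> (nat list \<Rightarrow> nat) \<Rightarrow> bool" where
  "shadow k f m g \<longleftrightarrow> (\<exists>l. shadow_l k f m g l)"

definition proper_shadow :: "nat \<Rightarrow> (nat list \<Rightarrow> nat) \<Rightarrow> nat \<Rightarrow> (nat list \<Rightarrow> nat) \<Rightarrow> bool" where
  "proper_shadow k f m g \<longleftrightarrow> (\<exists>l>0. shadow_l k f m g l)"

definition minimal :: "nat \<Rightarrow> (nat list \<Rightarrow> nat) \<Rightarrow> bool" where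
  "minimal k f \<longleftrightarrow> \<not> in_C k f \<and> (\<forall>m g. proper_shadow k f m g \<longrightarrow> in_C m g)"

definition bad :: "nat \<Rightarrow> (nat list \<Rightarrow> nat) \<Rightarrow> bool" where
  "bad k f \<longleftrightarrow> (\<exists>\<epsilon>::real. \<epsilon> \<in> \<rat> \<and> \<epsilon> > 0 \<and>
     (\<forall>i::nat. \<exists>n t A. n \<ge> i \<and> t \<ge> i \<and> A \<subseteq> {i..<n} \<and>
        (\<forall>r::nat. real (card (A \<inter> {..<r})) \<le> real r / 2 ^ i) \<and>
        real (card (img k f A \<inter> {..<t})) \<ge> \<epsilon> * real t))"

end

theory Submission imports Defs begin

abbreviation cnt :: "nat set \<Rightarrow> nat \<Rightarrow> real" where
  "cnt A r \<equiv> real (card (A \<inter> {..<r}))"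

definition dz :: "nat set \<Rightarrow> bool" where
  "dz A \<longleftrightarrow> (\<forall>e>0. \<exists>R. \<forall>r\<ge>R. cnt A r \<le> e * real r)"

lemma dz_tendsto: "dz A \<longleftrightarrow> (\<lambda>n. cnt A n / real n) \<longlonglongrightarrow> 0"
proof
  assume d: "dz A"
  show "(\<lambda>n. cnt A n / real n) \<longlonglongrightarrow> 0"
    unfolding LIMSEQ_iff
  proof (intro allI impI)
    fix e :: real assume e: "e > 0"
    then obtain R where R: "\<forall>r\<ge>R. cnt A r \<le> e/2 * real r" using d unfolding dz_def
      by (meson half_gt_zero)
    show "\<exists>no. \<forall>n\<ge>no. norm (cnt A n / real n - 0) < e"
    proof (intro exI[of _ "Suc R"] allI impI)
      fix n assume n: "Suc R \<le> n"
      have "cnt A n \<le> e/2 * real n" using R n by auto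
      moreover have "real n > 0" using n by auto
      ultimately have "cnt A n / real n \<le> e/2" by (simp add: divide_le_eq)
      moreover have "norm (cnt A n / real n - 0) = cnt A n / real n" by simp
      ultimately show "norm (cnt A n / real n - 0) < e" using e by linarith
    qed
  qed
next
  assume t: "(\<lambda>n. cnt A n / real n) \<longlonglongrightarrow> 0"
  show "dz A" unfolding dz_def
  proof (intro allI impI)
    fix e :: real assume e: "e > 0"
    then obtain R where R: "\<forall>n\<ge>R. norm (cnt A n / real n - 0) < e" using t unfolding LIMSEQ_iff by blast
    show "\<exists>R. \<forall>r\<ge>R. cnt A r \<le> e * real r"
    proof (intro exI[of _ R] allI impI)
      fix r assume r: "R \<le> r"
      show "cnt A r \<le> e * real r"
      proof (cases "r = 0")
        case True then show ?thesis by simp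
      next
        case False
        then have "cnt A r / real r < e" using R r by auto
        then show ?thesis using False by (simp add: divide_less_eq)
      qed
    qed
  qed
qed

lemma ud_zero_iff: "upper_density A = 0 \<longleftrightarrow> dz A"
proof
  assume u: "upper_density A = 0"
  have "0 \<le> liminf (\<lambda>n. ereal (cnt A n / real n))"
    by (rule Liminf_bounded) auto
  moreover have "liminf (\<lambda>n. ereal (cnt A n / real n)) \<le> limsup (\<lambda>n. ereal (cnt A n / real n))"
    by (rule Liminf_le_Limsup) simp
  ultimately have "liminf (\<lambda>n. ereal (cnt A n / real n)) = 0"
    using u unfolding upper_density_def by auto
  then have "(\<lambda>n. ereal (cnt A n / real n)) \<longlonglongrightarrow> ereal 0"
    using u unfolding upper_density_def
    by (intro Liminf_eq_Limsup) auto
  then show "dz A" unfolding dz_tendsto by simp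
next
  assume "dz A"
  then have "(\<lambda>n. ereal (cnt A n / real n)) \<longlonglongrightarrow> ereal 0" unfolding dz_tendsto by simp
  then have "limsup (\<lambda>n. ereal (cnt A n / real n)) = ereal 0"
    by (intro lim_imp_Limsup) auto
  then show "upper_density A = 0" unfolding upper_density_def by (simp add: zero_ereal_def)
qed

lemma dz_subset: "dz A \<Longrightarrow> B \<subseteq> A \<Longrightarrow> dz B"
  unfolding dz_def
proof (intro allI impI)
  fix e :: real assume "\<forall>e>0. \<exists>R. \<forall>r\<ge>R. cnt A r \<le> e * real r" "B \<subseteq> A" "e > 0"
  then obtain R where R: "\<forall>r\<ge>R. cnt A r \<le> e * real r" by blast
  have "\<And>r. cnt B r \<le> cnt A r" using \<open>B \<subseteq> A\<close>
    by (intro of_nat_mono card_mono) auto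
  then show "\<exists>R. \<forall>r\<ge>R. cnt B r \<le> e * real r" using R by (meson order_trans)
qed

lemma dz_Un: "dz A \<Longrightarrow> dz B \<Longrightarrow> dz (A \<union> B)"
  unfolding dz_def
proof (intro allI impI)
  fix e :: real assume a: "\<forall>e>0. \<exists>R. \<forall>r\<ge>R. cnt A r \<le> e * real r"
    and b: "\<forall>e>0. \<exists>R. \<forall>r\<ge>R. cnt B r \<le> e * real r" and e: "e > 0"
  obtain R1 where R1: "\<forall>r\<ge>R1. cnt A r \<le> e/2 * real r" using a e by (meson half_gt_zero)
  obtain R2 where R2: "\<forall>r\<ge>R2. cnt B r \<le> e/2 * real r" using b e by (meson half_gt_zero)
  have cU: "\<And>r. cnt (A \<union> B) r \<le> cnt A r + cnt B r"
  proof -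
    fix r
    have "(A \<union> B) \<inter> {..<r} = (A \<inter> {..<r}) \<union> (B \<inter> {..<r})" by auto
    then show "cnt (A \<union> B) r \<le> cnt A r + cnt B r"
      by (metis card_Un_le of_nat_add of_nat_mono)
  qed
  show "\<exists>R. \<forall>r\<ge>R. cnt (A \<union> B) r \<le> e * real r"
  proof (intro exI[of _ "max R1 R2"] allI impI)
    fix r assume "max R1 R2 \<le> r"
    then have "cnt A r \<le> e/2 * real r" "cnt B r \<le> e/2 * real r" using R1 R2 by auto
    moreover note cU[of r]
    ultimately show "cnt (A \<union> B) r \<le> e * real r" by linarith
  qed
qed

lemma dz_finite: "finite F \<Longrightarrow> dz F"
  unfolding dz_def
proof (intro allI impI)
  fix e :: real assume f: "finite F" and e: "e > 0"
  show "\<exists>R. \<forall>r\<ge>R. cnt F r \<le> e * real r"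
  proof (intro exI[of _ "nat \<lceil>real (card F) / e\<rceil>"] allI impI)
    fix r assume r: "nat \<lceil>real (card F) / e\<rceil> \<le> r"
    have "cnt F r \<le> real (card F)" using f by (intro of_nat_mono card_mono) auto
    also have "real (card F) / e \<le> real r" using r by linarith
    then have "real (card F) \<le> e * real r" using e by (simp add: divide_le_eq mult.commute)
    finally show "cnt F r \<le> e * real r" .
  qed
qed

lemma dz_UN: "finite I \<Longrightarrow> (\<And>i. i \<in> I \<Longrightarrow> dz (B i)) \<Longrightarrow> dz (\<Union>i\<in>I. B i)"
  by (induction I rule: finite_induct) (auto intro: dz_Un dz_finite)

lemma not_dz: "\<not> dz A \<Longrightarrow> \<exists>d>0. \<forall>i. \<exists>t\<ge>i. cnt A t > d * real t"
  unfolding dz_def by (meson not_le)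

lemma freq_not_dz:
  assumes d: "d > 0" and f: "\<forall>i. \<exists>t\<ge>i. cnt A t \<ge> d * real t"
  shows "\<not> dz A"
proof
  assume "dz A"
  then obtain R where R: "\<forall>r\<ge>R. cnt A r \<le> d/2 * real r" unfolding dz_def using d by (meson half_gt_zero)
  obtain t where t: "t \<ge> Suc R" "cnt A t \<ge> d * real t" using f by blast
  have "cnt A t \<le> d/2 * real t" using R t(1) by simp
  then have "d * real t \<le> d/2 * real t" using t(2) by linarith
  moreover have "real t > 0" using t by auto
  ultimately show False using d by (simp add: mult_le_cancel_right)
qed


lemma cnt_mono: "B \<subseteq> A \<Longrightarrow> cnt B r \<le> cnt A r"
  by (intro of_nat_mono card_mono) auto

lemma cnt_Un: "cnt (A \<union> B) r \<le> cnt A r + cnt B r"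
proof -
  have "(A \<union> B) \<inter> {..<r} = (A \<inter> {..<r}) \<union> (B \<inter> {..<r})" by auto
  then show ?thesis by (metis card_Un_le of_nat_add of_nat_mono)
qed

lemma in_C_dz: "in_C k f \<longleftrightarrow> k \<ge> 1 \<and> (\<forall>A. dz A \<longrightarrow> dz (img k f A))"
  unfolding in_C_def ud_zero_iff by simp

lemma tuples_mono: "A \<subseteq> B \<Longrightarrow> tuples k A \<subseteq> tuples k B"
  unfolding tuples_def by auto

lemma img_mono: "A \<subseteq> B \<Longrightarrow> img k f A \<subseteq> img k f B"
  unfolding img_def using tuples_mono by blast

lemma shadow_not_C:
  assumes sh: "shadow_l k f m g l" and nc: "\<not> in_C m g"
  shows "\<not> in_C k f"
proof -
  obtain \<pi> as where p: "\<pi> permutes {..<k}" and las: "length as = l" and lk: "l < k"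
    and mk: "m = k - l" and g: "g = (\<lambda>ys. perm_fun k \<pi> f (as @ ys))"
    using sh unfolding shadow_l_def by blast
  have "m \<ge> 1" using mk lk by auto
  then obtain A where A: "dz A" and nA: "\<not> dz (img m g A)" using nc unfolding in_C_dz by blast
  let ?A = "A \<union> set as"
  have dA: "dz ?A" by (rule dz_Un[OF A dz_finite]) auto
  have "img m g A \<subseteq> img k f ?A"
  proof
    fix y assume "y \<in> img m g A"
    then obtain ys where ys: "ys \<in> tuples m A" and y: "y = g ys" unfolding img_def by blast
    have ly: "length ys = m" and sy: "set ys \<subseteq> A" using ys unfolding tuples_def by auto
    let ?xs = "map (\<lambda>i. (as @ ys) ! \<pi> i) [0..<k]"
    have "set ?xs \<subseteq> ?A"
    proof
      fix x assume "x \<in> set ?xs"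
      then obtain i where i: "i < k" and x: "x = (as @ ys) ! \<pi> i" by auto
      have "\<pi> i < k" using permutes_in_image[OF p] i by auto
      then have "\<pi> i < length (as @ ys)" using las ly mk lk by auto
      then have "x \<in> set (as @ ys)" using x by (metis nth_mem)
      then show "x \<in> ?A" using sy by auto
    qed
    then have "?xs \<in> tuples k ?A" unfolding tuples_def by simp
    moreover have "y = f ?xs" using y g unfolding perm_fun_def by simp
    ultimately show "y \<in> img k f ?A" unfolding img_def by blast
  qed
  then have "\<not> dz (img k f ?A)" using nA dz_subset by blast
  then show ?thesis using dA unfolding in_C_dz by blast
qed

definition shiftp :: "nat \<Rightarrow> (nat \<Rightarrow> nat) \<Rightarrow> nat \<Rightarrow> nat" where
  "shiftp l \<sigma> x = (if x < l then x else l + \<sigma> (x - l))"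

lemma shiftp_permutes:
  assumes s: "\<sigma> permutes {..<m}" and k: "k = l + m"
  shows "shiftp l \<sigma> permutes {..<k}"
proof (rule bij_imp_permutes)
  have inj: "inj_on (shiftp l \<sigma>) {..<k}"
  proof (rule inj_onI)
    fix x y assume x: "x \<in> {..<k}" and y: "y \<in> {..<k}" and e: "shiftp l \<sigma> x = shiftp l \<sigma> y"
    show "x = y"
    proof (cases "x < l"; cases "y < l")
      assume "\<not> x < l" "\<not> y < l"
      then have "\<sigma> (x - l) = \<sigma> (y - l)" using e unfolding shiftp_def by simp
      then have "x - l = y - l" using permutes_inj[OF s] by (simp add: inj_eq)
      then show ?thesis using \<open>\<not> x < l\<close> \<open>\<not> y < l\<close> by simp
    qed (use e in \<open>auto simp: shiftp_def\<close>)
  qed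
  have sub: "shiftp l \<sigma> ` {..<k} \<subseteq> {..<k}"
  proof
    fix z assume "z \<in> shiftp l \<sigma> ` {..<k}"
    then obtain x where x: "x < k" and z: "z = shiftp l \<sigma> x" by auto
    show "z \<in> {..<k}"
    proof (cases "x < l")
      case False
      then have "x - l < m" using x k by auto
      then have "\<sigma> (x - l) < m" using permutes_in_image[OF s] by auto
      then show ?thesis using z False k unfolding shiftp_def by auto
    qed (use z x in \<open>auto simp: shiftp_def\<close>)
  qed
  have "shiftp l \<sigma> ` {..<k} = {..<k}" using endo_inj_surj[OF _ sub inj] by simp
  then show "bij_betw (shiftp l \<sigma>) {..<k} {..<k}" using inj unfolding bij_betw_def by simp
next
  fix x assume "x \<notin> {..<k}"
  then have "x - l \<notin> {..<m}" using k by auto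
  then have "\<sigma> (x - l) = x - l" using permutes_not_in[OF s] by auto
  then show "shiftp l \<sigma> x = x" using \<open>x \<notin> {..<k}\<close> k unfolding shiftp_def by auto
qed

lemma shadow_trans:
  assumes s1: "shadow_l k f m g l" and s2: "shadow_l m g m' h l'"
  shows "shadow_l k f m' h (l + l')"
proof -
  obtain \<pi> as where p: "\<pi> permutes {..<k}" and las: "length as = l" and lk: "l < k"
    and mk: "m = k - l" and g: "g = (\<lambda>ys. perm_fun k \<pi> f (as @ ys))"
    using s1 unfolding shadow_l_def by blast
  obtain \<sigma> bs where s: "\<sigma> permutes {..<m}" and lbs: "length bs = l'" and lm: "l' < m"
    and mm: "m' = m - l'" and h: "h = (\<lambda>zs. perm_fun m \<sigma> g (bs @ zs))"
    using s2 unfolding shadow_l_def by blast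
  have kk: "k = l + m" using mk lk by simp
  have tp: "shiftp l \<sigma> permutes {..<k}" using shiftp_permutes[OF s kk] .
  have rp: "shiftp l \<sigma> \<circ> \<pi> permutes {..<k}" using permutes_compose[OF p tp] .
  have "h = (\<lambda>zs. perm_fun k (shiftp l \<sigma> \<circ> \<pi>) f ((as @ bs) @ zs))"
  proof
    fix zs
    let ?v = "map (\<lambda>j. (bs @ zs) ! \<sigma> j) [0..<m]"
    have eq: "(as @ ?v) ! x = (as @ bs @ zs) ! (shiftp l \<sigma> x)" if x: "x < k" for x
    proof (cases "x < l")
      case True then show ?thesis using las unfolding shiftp_def by (simp add: nth_append)
    next
      case False
      then have "x - l < m" using x kk by auto
      then show ?thesis using False las unfolding shiftp_def by (simp add: nth_append)
    qed
    have "h zs = f (map (\<lambda>i. (as @ ?v) ! \<pi> i) [0..<k])"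
      unfolding h g perm_fun_def by simp
    also have "map (\<lambda>i. (as @ ?v) ! \<pi> i) [0..<k] = map (\<lambda>i. (as @ bs @ zs) ! (shiftp l \<sigma> (\<pi> i))) [0..<k]"
    proof (rule map_cong[OF refl])
      fix i assume "i \<in> set [0..<k]"
      then have "\<pi> i < k" using permutes_in_image[OF p] by auto
      then show "(as @ ?v) ! \<pi> i = (as @ bs @ zs) ! (shiftp l \<sigma> (\<pi> i))" using eq by blast
    qed
    finally show "h zs = perm_fun k (shiftp l \<sigma> \<circ> \<pi>) f ((as @ bs) @ zs)"
      unfolding perm_fun_def by simp
  qed
  moreover have "length (as @ bs) = l + l'" using las lbs by simp
  moreover have "l + l' < k" using lm kk by simp
  moreover have "m' = k - (l + l')" using mm kk by simp
  ultimately show ?thesis unfolding shadow_l_def using rp by blast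
qed

lemma img_cong: "(\<And>xs. length xs = k \<Longrightarrow> g xs = f xs) \<Longrightarrow> img k g A = img k f A"
  unfolding img_def tuples_def by (intro image_cong) auto

lemma shadow_id:
  assumes "k \<ge> 1"
  shows "shadow_l k f k (\<lambda>ys. perm_fun k id f ([] @ ys)) 0"
    and "in_C k (\<lambda>ys. perm_fun k id f ([] @ ys)) \<longleftrightarrow> in_C k f"
proof -
  show "shadow_l k f k (\<lambda>ys. perm_fun k id f ([] @ ys)) 0"
    unfolding shadow_l_def
    apply (rule exI[of _ id], rule exI[of _ "[]"]) using assms by (simp add: permutes_id)
  have "perm_fun k id f ([] @ xs) = f xs" if lx: "length xs = k" for xs
    unfolding perm_fun_def using map_nth[of xs] lx by simp
  then have "\<And>A. img k (\<lambda>ys. perm_fun k id f ([] @ ys)) A = img k f A" by (rule img_cong)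
  then show "in_C k (\<lambda>ys. perm_fun k id f ([] @ ys)) \<longleftrightarrow> in_C k f"
    unfolding in_C_def by simp
qed

lemma exists_minimal:
  assumes k: "k \<ge> 1" and nc: "\<not> in_C k f"
  shows "\<exists>m g. shadow k f m g \<and> minimal m g"
proof -
  define L where "L = {l. \<exists>m g. shadow_l k f m g l \<and> \<not> in_C m g}"
  have "0 \<in> L" using shadow_id[OF k, of f] nc unfolding L_def by blast
  have "L \<subseteq> {..<k}" unfolding L_def shadow_l_def by auto
  then have fin: "finite L" by (rule finite_subset) auto
  define l0 where "l0 = Max L"
  have "l0 \<in> L" unfolding l0_def using fin \<open>0 \<in> L\<close> by (intro Max_in) auto
  then obtain m g where sg: "shadow_l k f m g l0" and ng: "\<not> in_C m g" unfolding L_def by blast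
  have "minimal m g" unfolding minimal_def
  proof (intro conjI allI impI)
    show "\<not> in_C m g" by fact
  next
    fix m' h assume "proper_shadow m g m' h"
    then obtain l' where l': "l' > 0" "shadow_l m g m' h l'" unfolding proper_shadow_def by blast
    show "in_C m' h"
    proof (rule ccontr)
      assume "\<not> in_C m' h"
      then have "l0 + l' \<in> L" using shadow_trans[OF sg l'(2)] unfolding L_def by blast
      then have "l0 + l' \<le> l0" unfolding l0_def by (rule Max_ge[OF fin])
      then show False using l'(1) by simp
    qed
  qed
  then show ?thesis using sg unfolding shadow_def by blast
qed


definition insp :: "nat \<Rightarrow> nat \<Rightarrow> nat" where
  "insp p i = (if i < p then i + 1 else if i = p then 0 else i)"

lemma insp_permutes:
  assumes pm: "p < m"
  shows "insp p permutes {..<m}"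
proof (rule bij_imp_permutes)
  have inj: "inj_on (insp p) {..<m}"
    by (rule inj_onI) (auto simp: insp_def split: if_splits)
  have sub: "insp p ` {..<m} \<subseteq> {..<m}" using pm by (auto simp: insp_def)
  have "insp p ` {..<m} = {..<m}" using endo_inj_surj[OF _ sub inj] by simp
  then show "bij_betw (insp p) {..<m} {..<m}" using inj unfolding bij_betw_def by simp
next
  fix x assume "x \<notin> {..<m}" then show "insp p x = x" using pm by (auto simp: insp_def)
qed

lemma insp_eq:
  assumes pm: "p < m" and ly: "length ys = m - 1"
  shows "perm_fun m (insp p) g ([a] @ ys) = g (take p ys @ a # drop p ys)"
proof -
  have "map (\<lambda>i. ([a] @ ys) ! insp p i) [0..<m] = take p ys @ a # drop p ys"
  proof (rule nth_equalityI)
    show "length (map (\<lambda>i. ([a] @ ys) ! insp p i) [0..<m]) = length (take p ys @ a # drop p ys)"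
      using pm ly by auto
  next
    fix i assume "i < length (map (\<lambda>i. ([a] @ ys) ! insp p i) [0..<m])"
    then have i: "i < m" by simp
    show "map (\<lambda>i. ([a] @ ys) ! insp p i) [0..<m] ! i = (take p ys @ a # drop p ys) ! i"
    proof (cases "i < p")
      case True then show ?thesis using i pm ly by (simp add: insp_def nth_append)
    next
      case False
      show ?thesis
      proof (cases "i = p")
        case True then show ?thesis using i pm ly by (simp add: insp_def nth_append)
      next
        case False
        then have "i > p" using \<open>\<not> i < p\<close> by simp
        then show ?thesis using i pm ly
          by (simp add: insp_def nth_append min_def nth_Cons')
      qed
    qed
  qed
  then show ?thesis unfolding perm_fun_def by simp
qed

lemma cover:
  assumes xs: "xs \<in> tuples m A" and nx: "\<not> set xs \<subseteq> {N..}"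
  shows "\<exists>p<m. \<exists>a<N. \<exists>ys\<in>tuples (m - 1) A. xs = take p ys @ a # drop p ys"
proof -
  have lx: "length xs = m" and sx: "set xs \<subseteq> A" using xs unfolding tuples_def by auto
  obtain x where "x \<in> set xs" "x < N" using nx by (meson atLeast_iff not_le subsetI)
  then obtain p where p: "p < m" "xs ! p < N" using lx by (metis in_set_conv_nth)
  define ys where "ys = take p xs @ drop (Suc p) xs"
  have "ys \<in> tuples (m - 1) A" unfolding tuples_def ys_def using sx p lx
    by (auto dest: in_set_takeD in_set_dropD)
  moreover have "xs = take p ys @ xs ! p # drop p ys"
    unfolding ys_def using p lx by (simp add: id_take_nth_drop[symmetric])
  ultimately show ?thesis using p by blast
qed

lemma minimal_bad:
  assumes m: "m \<ge> 1" and mi: "minimal m g"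
  shows "bad m g"
proof -
  obtain A where A: "dz A" and nA: "\<not> dz (img m g A)"
    using mi m unfolding minimal_def in_C_dz by blast
  obtain d where d: "d > 0" and fr: "\<forall>i. \<exists>t\<ge>i. cnt (img m g A) t > d * real t"
    using not_dz[OF nA] by blast
  define E where "E N = (\<Union>p<m. \<Union>a<N. (\<lambda>ys. g (take p ys @ a # drop p ys)) ` tuples (m - 1) A)" for N
  have dP: "dz ((\<lambda>ys. g (take p ys @ a # drop p ys)) ` tuples (m - 1) A)" if p0: "p < m" for p a
  proof -
    have p: "p \<in> {..<m}" using p0 by simp
    show "dz ((\<lambda>ys. g (take p ys @ a # drop p ys)) ` tuples (m - 1) A)"
    proof (cases "m = 1")
      case True
      then have "tuples (m - 1) A = {[]}" unfolding tuples_def by auto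
      then show ?thesis by (intro dz_finite) auto
    next
      case False
      define h where "h = (\<lambda>ys. perm_fun m (insp p) g ([a] @ ys))"
      have "shadow_l m g (m - 1) h 1" unfolding shadow_l_def h_def
        using insp_permutes[of p m] p False m by (intro exI[of _ "insp p"] exI[of _ "[a]"]) auto
      then have "in_C (m - 1) h" using mi unfolding minimal_def proper_shadow_def by blast
      then have "dz (img (m - 1) h A)" using A unfolding in_C_dz by blast
      moreover have "img (m - 1) h A = (\<lambda>ys. g (take p ys @ a # drop p ys)) ` tuples (m - 1) A"
        unfolding img_def tuples_def h_def using insp_eq[of p m] p by (intro image_cong) auto
      ultimately show ?thesis by simp
    qed
  qed
  have dE: "dz (E N)" for N
    unfolding E_def by (intro dz_UN finite_lessThan dP) auto
  have covN: "img m g A \<subseteq> img m g (A \<inter> {N..}) \<union> E N" for N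
  proof
    fix y assume "y \<in> img m g A"
    then obtain xs where xs: "xs \<in> tuples m A" and y: "y = g xs" unfolding img_def by blast
    show "y \<in> img m g (A \<inter> {N..}) \<union> E N"
    proof (cases "set xs \<subseteq> {N..}")
      case True
      then have "xs \<in> tuples m (A \<inter> {N..})" using xs unfolding tuples_def by auto
      then show ?thesis using y unfolding img_def by blast
    next
      case False
      then obtain p a ys where pa: "p < m" "a < N" and ys: "ys \<in> tuples (m - 1) A"
        and xe: "xs = take p ys @ a # drop p ys"
        using cover[OF xs] by blast
      have im: "y \<in> (\<lambda>ys. g (take p ys @ a # drop p ys)) ` tuples (m - 1) A"
        using y xe ys by (intro rev_image_eqI[of ys]) auto
      have inner: "y \<in> (\<Union>a\<in>{..<N}. (\<lambda>ys. g (take p ys @ a # drop p ys)) ` tuples (m - 1) A)"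
        apply (rule UN_I[where a=a]) using pa(2) im by auto
      have "y \<in> E N" unfolding E_def
        apply (rule UN_I[where a=p]) using pa(1) inner by auto
      then show ?thesis by blast
    qed
  qed
  have key: "\<exists>t\<ge>i. cnt (img m g (A \<inter> {N..})) t \<ge> d/2 * real t" for N i
  proof -
    obtain R where R: "\<forall>r\<ge>R. cnt (E N) r \<le> d/2 * real r" using dE[of N] d unfolding dz_def
      by (meson half_gt_zero)
    obtain t where t: "t \<ge> max i R" "cnt (img m g A) t > d * real t" using fr by blast
    have "cnt (img m g A) t \<le> cnt (img m g (A \<inter> {N..}) \<union> E N) t" using covN by (rule cnt_mono)
    also have "\<dots> \<le> cnt (img m g (A \<inter> {N..})) t + cnt (E N) t" by (rule cnt_Un)
    moreover have "cnt (E N) t \<le> d/2 * real t" using R t(1) by simp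
    ultimately have "cnt (img m g (A \<inter> {N..})) t \<ge> d/2 * real t" using t(2) by linarith
    then show ?thesis using t by auto
  qed
  obtain \<epsilon> where e: "\<epsilon> \<in> \<rat>" "0 < \<epsilon>" "\<epsilon> < d/2" using Rats_dense_in_real[of 0 "d/2"] d by auto
  show ?thesis unfolding bad_def
  proof (intro exI[of _ \<epsilon>] conjI allI e(1) e(2))
    fix i :: nat
    have "(1/2^i :: real) > 0" by simp
    then obtain R where R: "\<forall>r\<ge>R. cnt A r \<le> 1/2^i * real r" using A unfolding dz_def by blast
    define N where "N = max i R"
    obtain t where t: "t \<ge> i" "cnt (img m g (A \<inter> {N..})) t \<ge> d/2 * real t" using key by blast
    define Y where "Y = img m g (A \<inter> {N..}) \<inter> {..<t}"
    have fY: "finite Y" unfolding Y_def by simp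
    have "Y \<subseteq> g ` tuples m (A \<inter> {N..})" unfolding Y_def img_def by blast
    then obtain C where C: "C \<subseteq> tuples m (A \<inter> {N..})" "finite C" "Y = g ` C"
      using finite_subset_image[OF fY] by blast
    have "finite (\<Union> (set ` C))" using C(2) by auto
    then obtain n0 where n0: "\<Union> (set ` C) \<subseteq> {..<n0}" using finite_nat_iff_bounded by blast
    define n where "n = max n0 i"
    define A' where "A' = A \<inter> {N..<n}"
    have P1: "A' \<subseteq> {i..<n}" unfolding A'_def N_def by auto
    have P2: "real (card (A' \<inter> {..<r})) \<le> real r / 2 ^ i" for r
    proof (cases "r \<le> N")
      case True
      then have "A' \<inter> {..<r} = {}" unfolding A'_def by auto
      then show ?thesis by simp
    next
      case False
      then have "cnt A' r \<le> cnt A r" unfolding A'_def by (intro cnt_mono) auto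
      also have "\<dots> \<le> 1/2^i * real r" using R False unfolding N_def by auto
      finally show ?thesis by simp
    qed
    have P3: "real (card (img m g A' \<inter> {..<t})) \<ge> \<epsilon> * real t"
    proof -
      have "C \<subseteq> tuples m A'"
      proof
        fix xs assume "xs \<in> C"
        then have "xs \<in> tuples m (A \<inter> {N..})" "set xs \<subseteq> {..<n0}" using C(1) n0 by auto
        then show "xs \<in> tuples m A'" unfolding tuples_def A'_def n_def by (auto simp: subset_iff)
      qed
      note CA = this
      have "Y \<subseteq> img m g A' \<inter> {..<t}"
      proof
        fix y assume yY: "y \<in> Y"
        then have "y < t" unfolding Y_def by simp
        obtain xs where "xs \<in> C" "y = g xs" using yY C(3) by blast
        then have "y \<in> img m g A'" unfolding img_def using CA by blast
        then show "y \<in> img m g A' \<inter> {..<t}" using \<open>y < t\<close> by simp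
      qed
      then have "real (card Y) \<le> real (card (img m g A' \<inter> {..<t}))"
        by (intro of_nat_mono card_mono) auto
      moreover have "\<epsilon> * real t \<le> d/2 * real t" using e(3) by (intro mult_right_mono) auto
      moreover have "real (card Y) = cnt (img m g (A \<inter> {N..})) t" unfolding Y_def by simp
      ultimately show ?thesis using t(2) by linarith
    qed
    have P4: "i \<le> n" unfolding n_def by simp
    show "\<exists>n t A. i \<le> n \<and> i \<le> t \<and> A \<subseteq> {i..<n} \<and>
        (\<forall>r. real (card (A \<inter> {..<r})) \<le> real r / 2 ^ i) \<and>
        \<epsilon> * real t \<le> real (card (img m g A \<inter> {..<t}))"
      apply (rule exI[of _ n], rule exI[of _ t], rule exI[of _ A'])
      using t(1) P1 P2 P3 P4 by simp
  qed
qed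


fun seqs :: "(nat \<Rightarrow> nat) \<Rightarrow> nat \<Rightarrow> nat" where
  "seqs NN 0 = 1"
| "seqs NN (Suc j) = 2 ^ Suc j * NN (seqs NN j) + 1"

lemma bad_not_C:
  assumes b: "bad m g"
  shows "\<not> in_C m g"
proof -
  obtain \<epsilon> :: real where e: "\<epsilon> > 0" and bb: "\<forall>i::nat. \<exists>n t A. n \<ge> i \<and> t \<ge> i \<and> A \<subseteq> {i..<n} \<and>
        (\<forall>r::nat. real (card (A \<inter> {..<r})) \<le> real r / 2 ^ i) \<and>
        real (card (img m g A \<inter> {..<t})) \<ge> \<epsilon> * real t"
    using b unfolding bad_def by blast
  define Q where "Q i n t A \<longleftrightarrow> n \<ge> i \<and> t \<ge> i \<and> A \<subseteq> {i..<n} \<and>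
        (\<forall>r::nat. real (card (A \<inter> {..<r})) \<le> real r / 2 ^ i) \<and>
        real (card (img m g A \<inter> {..<t})) \<ge> \<epsilon> * real t" for i n t :: nat and A
  have "\<forall>i. \<exists>x. Q i (fst x) (fst (snd x)) (snd (snd x))"
  proof
    fix i
    obtain n t A where "Q i n t A" unfolding Q_def using bb by blast
    then show "\<exists>x. Q i (fst x) (fst (snd x)) (snd (snd x))" by (intro exI[of _ "(n, t, A)"]) simp
  qed
  then obtain F where F: "\<forall>i. Q i (fst (F i)) (fst (snd (F i))) (snd (snd (F i)))"
    using choice[of "\<lambda>i x. Q i (fst x) (fst (snd x)) (snd (snd x))"] by blast
  define NN where "NN i = fst (F i)" for i
  define TT where "TT i = fst (snd (F i))" for i
  define AA where "AA i = snd (snd (F i))" for i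
  have NTA: "NN i \<ge> i \<and> TT i \<ge> i \<and> AA i \<subseteq> {i..<NN i} \<and>
        (\<forall>r::nat. real (card (AA i \<inter> {..<r})) \<le> real r / 2 ^ i) \<and>
        real (card (img m g (AA i) \<inter> {..<TT i})) \<ge> \<epsilon> * real (TT i)" for i
    using F unfolding NN_def TT_def AA_def Q_def by blast
  define s where "s = seqs NN"
  have sS: "s (Suc j) = 2 ^ Suc j * NN (s j) + 1" for j unfolding s_def by simp
  have s0: "s 0 = 1" unfolding s_def by simp
  have NNge: "NN i \<ge> i" for i using NTA[of i] by blast
  have sinc: "s j < s (Suc j)" for j
  proof -
    have "NN (s j) \<le> 2 ^ Suc j * NN (s j)" by simp
    then show ?thesis using sS[of j] NNge[of "s j"] by linarith
  qed
  have smono: "j \<le> j' \<Longrightarrow> s j \<le> s j'" for j j'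
    using sinc by (metis lift_Suc_mono_le order_less_imp_le)
  have sge: "s j \<ge> j + 1" for j
  proof (induction j)
    case 0 then show ?case using s0 by simp
  next
    case (Suc j) then show ?case using sinc[of j] by simp
  qed
  define P where "P j = AA (s j)" for j
  have Psub: "P j \<subseteq> {s j..<NN (s j)}" for j unfolding P_def using NTA[of "s j"] by blast
  have Pcnt: "cnt (P j) r \<le> real r / 2 ^ (s j)" for j r unfolding P_def using NTA[of "s j"] by blast
  have NNlt: "NN (s j) < s (Suc j)" for j
  proof -
    have "NN (s j) \<le> 2 ^ Suc j * NN (s j)" by simp
    then show ?thesis using sS[of j] by linarith
  qed
  define U where "U J = (\<Union>j<J. P j)" for J
  have Ucard: "real (card (U J)) * 2 ^ J \<le> real (s J)" for J
  proof (cases J)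
    case 0 then show ?thesis unfolding U_def by simp
  next
    case (Suc J')
    have "U J \<subseteq> {..<NN (s J')}"
    proof
      fix x assume "x \<in> U J"
      then obtain j where j: "j < J" "x \<in> P j" unfolding U_def by blast
      have "j \<le> J'" using j Suc by simp
      then have "NN (s j) \<le> NN (s J')"
      proof (cases "j = J'")
        case False
        then have "Suc j \<le> J'" using \<open>j \<le> J'\<close> by simp
        then have "NN (s j) < s J'" using NNlt[of j] smono[of "Suc j" J'] by linarith
        then show ?thesis using NNge[of "s J'"] by linarith
      qed simp
      then show "x \<in> {..<NN (s J')}" using Psub[of j] j by auto
    qed
    then have "card (U J) \<le> NN (s J')" by (metis card_lessThan card_mono finite_lessThan)
    then have "real (card (U J)) * 2 ^ J \<le> real (NN (s J')) * 2 ^ J"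
      by (intro mult_right_mono) auto
    also have "\<dots> \<le> real (s J)" using sS[of J'] Suc by simp
    finally show ?thesis .
  qed
  define AU where "AU = (\<Union>j. P j)"
  have interval: "cnt AU r \<le> 2 * real r / 2 ^ J" if r: "s J < r" "r \<le> s (Suc J)" for J r
  proof -
    have "AU \<inter> {..<r} \<subseteq> U J \<union> (P J \<inter> {..<r})"
    proof
      fix x assume "x \<in> AU \<inter> {..<r}"
      then obtain j where j: "x \<in> P j" "x < r" unfolding AU_def by blast
      show "x \<in> U J \<union> (P J \<inter> {..<r})"
      proof (cases "j < J")
        case True then show ?thesis using j unfolding U_def by blast
      next
        case False
        show ?thesis
        proof (cases "j = J")
          case True then show ?thesis using j by blast
        next
          case False
          then have "Suc J \<le> j" using \<open>\<not> j < J\<close> by simp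
          then have "s (Suc J) \<le> s j" by (rule smono)
          moreover have "s j \<le> x" using Psub[of j] j by auto
          ultimately show ?thesis using j r by linarith
        qed
      qed
    qed
    then have "cnt AU r \<le> real (card (U J \<union> (P J \<inter> {..<r})))"
      unfolding U_def by (intro of_nat_mono card_mono) (auto intro!: finite_subset[OF Psub])
    also have "\<dots> \<le> real (card (U J)) + cnt (P J) r"
      by (metis card_Un_le of_nat_add of_nat_mono)
    also have "\<dots> \<le> real r / 2 ^ J + real r / 2 ^ J"
    proof (rule add_mono)
      have "real (card (U J)) * 2 ^ J \<le> real r" using Ucard[of J] r by linarith
      then show "real (card (U J)) \<le> real r / 2 ^ J" by (simp add: le_divide_eq)
      have "(2::real) ^ J \<le> 2 ^ s J" using sge[of J] by (intro power_increasing) auto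
      then have "real r / 2 ^ s J \<le> real r / 2 ^ J" by (intro divide_left_mono) auto
      then show "cnt (P J) r \<le> real r / 2 ^ J" using Pcnt[of J r] by linarith
    qed
    finally show ?thesis by simp
  qed
  have bound_d: "s J < r \<Longrightarrow> r \<le> s (J + d) \<Longrightarrow> cnt AU r \<le> 2 * real r / 2 ^ J" for J d r
  proof (induction d)
    case 0 then show ?case by simp
  next
    case (Suc d)
    show ?case
    proof (cases "r \<le> s (J + d)")
      case True then show ?thesis using Suc by blast
    next
      case False
      then have "cnt AU r \<le> 2 * real r / 2 ^ (J + d)" using Suc.prems by (intro interval) auto
      also have "\<dots> \<le> 2 * real r / 2 ^ J" by (intro divide_left_mono power_increasing) auto
      finally show ?thesis .
    qed
  qed
  have bound: "s J < r \<Longrightarrow> cnt AU r \<le> 2 * real r / 2 ^ J" for J r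
  proof -
    assume "s J < r"
    moreover have "r \<le> s (J + r)" using sge[of "J + r"] by simp
    ultimately show ?thesis by (rule bound_d)
  qed
  have dAU: "dz AU" unfolding dz_def
  proof (intro allI impI)
    fix e :: real assume e: "e > 0"
    obtain J where J: "(1/2::real) ^ J < e / 2" using real_arch_pow_inv[of "e/2" "1/2"] e by auto
    show "\<exists>R. \<forall>r\<ge>R. cnt AU r \<le> e * real r"
    proof (intro exI[of _ "Suc (s J)"] allI impI)
      fix r assume "Suc (s J) \<le> r"
      then have "cnt AU r \<le> 2 * real r / 2 ^ J" by (intro bound) auto
      also have "\<dots> = 2 * real r * (1/2) ^ J" by (simp add: power_one_over)
      also have "\<dots> \<le> 2 * real r * (e/2)" by (rule mult_left_mono[OF less_imp_le[OF J]]) simp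
      finally show "cnt AU r \<le> e * real r" by (simp add: mult.commute)
    qed
  qed
  have "\<not> dz (img m g AU)"
  proof (rule freq_not_dz[OF e], intro allI)
    fix i
    have "P i \<subseteq> AU" unfolding AU_def by blast
    then have "img m g (P i) \<subseteq> img m g AU" by (rule img_mono)
    then have "cnt (img m g (P i)) (TT (s i)) \<le> cnt (img m g AU) (TT (s i))" by (rule cnt_mono)
    moreover have "cnt (img m g (P i)) (TT (s i)) \<ge> \<epsilon> * real (TT (s i))"
      unfolding P_def using NTA[of "s i"] by blast
    moreover have "TT (s i) \<ge> i" using NTA[of "s i"] sge[of i] by linarith
    ultimately show "\<exists>t\<ge>i. \<epsilon> * real t \<le> cnt (img m g AU) t" by (intro exI[of _ "TT (s i)"]) auto
  qed
  then show ?thesis using dAU unfolding in_C_dz by blast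
qed

theorem mainTheorem6:
  fixes k :: nat and f :: "nat list \<Rightarrow> nat"
  assumes "k \<ge> 1"
  shows "(\<not> in_C k f \<longleftrightarrow> (\<exists>m g. shadow k f m g \<and> minimal m g))
       \<and> (\<not> in_C k f \<longleftrightarrow> (\<exists>m g. shadow k f m g \<and> bad m g))
       \<and> (\<not> in_C k f \<longleftrightarrow> (\<exists>m g. shadow k f m g \<and> \<not> in_C m g))"
proof -
  have d2a: "\<not> in_C k f" if "shadow k f m g" "\<not> in_C m g" for m g
    using that shadow_not_C unfolding shadow_def by blast
  have shm: "m \<ge> 1" if "shadow k f m g" for m g
    using that unfolding shadow_def shadow_l_def by auto
  have a2b: "\<exists>m g. shadow k f m g \<and> minimal m g" if "\<not> in_C k f"
    using exists_minimal[OF assms that] .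
  show ?thesis
  proof (intro conjI iffI)
    assume "\<not> in_C k f" then show "\<exists>m g. shadow k f m g \<and> minimal m g" by (rule a2b)
  next
    assume "\<exists>m g. shadow k f m g \<and> minimal m g"
    then show "\<not> in_C k f" using d2a unfolding minimal_def by blast
  next
    assume "\<not> in_C k f"
    then obtain m g where "shadow k f m g" "minimal m g" using a2b by blast
    then show "\<exists>m g. shadow k f m g \<and> bad m g" using minimal_bad shm by blast
  next
    assume "\<exists>m g. shadow k f m g \<and> bad m g"
    then show "\<not> in_C k f" using d2a bad_not_C by blast
  next
    assume "\<not> in_C k f"
    then obtain m g where "shadow k f m g" "minimal m g" using a2b by blast
    then show "\<exists>m g. shadow k f m g \<and> \<not> in_C m g" unfolding minimal_def by blast
  next
    assume "\<exists>m g. shadow k f m g \<and> \<not> in_C m g"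
    then show "\<not> in_C k f" using d2a by blast
  qed
qed

end
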